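(* Let $\Pi$ be a $3$-decomposable $30$-half-period with classes $A,B,C$. Then $N_{15}^{bi}(\Pi)=15$.
   Context: An allowable sequence on an $n$-element set is a doubly infinite sequence of permutations of the set (lists on positions $1,\dots,n$) in which consecutive permutations differ by swapping two adjacent elements (a transposition) and $\pi_{i+\binom n2}$ is the reverse of $\pi_i$; an $n$-half-period is a block $(\pi_0,\dots,\pi_{\binom n2})$ of consecutive permutations (each pair of elements is swapped exactly once in it). A transposition swapping the elements in positions $i,i+1$ is an $i$-transposition; for $1\le k\le n/2$ it is $k$-critical if it is a $k$-transposition or an $(n-k)$-transposition (for $n=30$, the $15$-critical transpositions are the $15$-transpositions). An $n$-half-period $\Pi$ ($3\mid n$) is $3$-decomposable if its elements can be labeled $A=\{a_1,\dots,a_{n/3}\}$, $B=\{b_1,\dots,b_{n/3}\}$, $C=\{c_1,\dots,c_{n/3}\}$ so that its first permutation is $(a_{n/3},\dots,a_1,b_1,\dots,b_{n/3},c_1,\dots,c_{n/3})$, every transposition between an element of $A$ and an element of $B$ occurs before every transposition between an element of $C$ and an element of $A\cup B$, and every transposition between $A$ and $C$ occurs before every transposition between $B$ and $C$. A transposition is bichromatic if its two elements lie in different classes among $A,B,C$. $N_k^{bi}(\Pi)$ is the number of bichromatic $k$-critical transpositions of $\Pi$. *)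

theory Defs
  imports Main
begin

(* ys arises from xs by an i-transposition: swapping the elements in the
   (1-based) positions i and i+1. *)
definition adj_swap :: "nat \<Rightarrow> 'a list \<Rightarrow> 'a list \<Rightarrow> bool" where
  "adj_swap i xs ys \<longleftrightarrow> 1 \<le> i \<and> i < length xs \<and>
     ys = xs[i - 1 := xs ! i, i := xs ! (i - 1)]"

definition allowable_seq :: "nat \<Rightarrow> (int \<Rightarrow> 'a list) \<Rightarrow> bool" where
  "allowable_seq n S \<longleftrightarrow>
     (\<forall>j. distinct (S j) \<and> length (S j) = n \<and> set (S j) = set (S 0)) \<and>
     (\<forall>j. \<exists>i. adj_swap i (S j) (S (j + 1))) \<and>
     (\<forall>j. S (j + int (n choose 2)) = rev (S j))"

definition half_period :: "nat \<Rightarrow> 'a list list \<Rightarrow> bool" where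
  "half_period n P \<longleftrightarrow>
     (\<exists>S j. allowable_seq n S \<and> P = map (\<lambda>k. S (j + int k)) [0..<(n choose 2) + 1])"

definition is_itransp :: "'a list list \<Rightarrow> nat \<Rightarrow> nat \<Rightarrow> bool" where
  "is_itransp P t i \<longleftrightarrow> adj_swap i (P ! t) (P ! Suc t)"

definition critical :: "nat \<Rightarrow> nat \<Rightarrow> 'a list list \<Rightarrow> nat \<Rightarrow> bool" where
  "critical n k P t \<longleftrightarrow> is_itransp P t k \<or> is_itransp P t (n - k)"

definition swapped :: "'a list list \<Rightarrow> nat \<Rightarrow> 'a set" where
  "swapped P t = {x. \<exists>p < length (P ! t). P ! t ! p = x \<and> P ! Suc t ! p \<noteq> x}"

definition between :: "'a set \<Rightarrow> 'a set \<Rightarrow> 'a set \<Rightarrow> bool" where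
  "between X Y pr \<longleftrightarrow> (\<exists>x y. pr = {x, y} \<and> x \<in> X \<and> y \<in> Y)"

definition bichromatic :: "'a set \<Rightarrow> 'a set \<Rightarrow> 'a set \<Rightarrow> 'a set \<Rightarrow> bool" where
  "bichromatic A B C pr \<longleftrightarrow> between A B pr \<or> between A C pr \<or> between B C pr"

definition three_decomposable_with ::
  "nat \<Rightarrow> 'a list list \<Rightarrow> 'a set \<Rightarrow> 'a set \<Rightarrow> 'a set \<Rightarrow> bool" where
  "three_decomposable_with n P A B C \<longleftrightarrow> 3 dvd n \<and>
     (\<exists>a b c :: nat \<Rightarrow> 'a.
        A = a ` {1..n div 3} \<and> B = b ` {1..n div 3} \<and> C = c ` {1..n div 3} \<and>
        P ! 0 = map a (rev [1..<n div 3 + 1]) @ map b [1..<n div 3 + 1] @ map c [1..<n div 3 + 1] \<and>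
        (\<forall>t t'. t < n choose 2 \<and> t' < n choose 2 \<and>
            between A B (swapped P t) \<and> between C (A \<union> B) (swapped P t') \<longrightarrow> t < t') \<and>
        (\<forall>t t'. t < n choose 2 \<and> t' < n choose 2 \<and>
            between A C (swapped P t) \<and> between B C (swapped P t') \<longrightarrow> t < t'))"

definition N_bi :: "nat \<Rightarrow> nat \<Rightarrow> 'a list list \<Rightarrow> 'a set \<Rightarrow> 'a set \<Rightarrow> 'a set \<Rightarrow> nat" where
  "N_bi n k P A B C =
     card {t. t < n choose 2 \<and> critical n k P t \<and> bichromatic A B C (swapped P t)}"

end

theory Submission
  imports Defs
begin

definition idx :: "'a list \<Rightarrow> 'a \<Rightarrow> nat" where
  "idx xs x = (LEAST i. i < length xs \<and> xs ! i = x)"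

lemma idx_in: assumes "x \<in> set xs" shows "idx xs x < length xs \<and> xs ! idx xs x = x"
proof -
  obtain i where "i < length xs" "xs ! i = x" using assms by (auto simp: in_set_conv_nth)
  then show ?thesis unfolding idx_def by (metis (mono_tags, lifting) LeastI)
qed

lemma idx_nth: assumes "distinct xs" "i < length xs" shows "idx xs (xs ! i) = i"
proof -
  have "idx xs (xs!i) < length xs \<and> xs ! idx xs (xs!i) = xs ! i" using idx_in[of "xs!i" xs] assms by auto
  then show ?thesis using assms nth_eq_iff_index_eq by blast
qed

lemma idx_inj: assumes "x \<in> set xs" "y \<in> set xs" "idx xs x = idx xs y" shows "x = y"
  using idx_in assms by metis

lemma idx_swap:
  assumes "distinct xs" "k + 1 < length xs" "v \<in> set xs"
  shows "idx (xs[k := xs!(k+1), k+1 := xs!k]) v =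
    (if v = xs!k then k+1 else if v = xs!(k+1) then k else idx xs v)"
proof -
  let ?ys = "xs[k := xs!(k+1), k+1 := xs!k]"
  have d: "distinct ?ys" using assms by (simp add: distinct_list_update nth_eq_iff_index_eq set_update_distinct)
  have l: "length ?ys = length xs" by simp
  have y1: "?ys ! (k+1) = xs!k" using assms by simp
  have y0: "?ys ! k = xs!(k+1)" using assms by (simp add: nth_list_update)
  obtain p where p: "p < length xs" "xs!p = v" using assms by (auto simp: in_set_conv_nth)
  show ?thesis
  proof (cases "p = k")
    case True then show ?thesis using idx_nth[OF d, of "k+1"] y1 p assms by auto
  next
    case F1: False
    show ?thesis
    proof (cases "p = k+1")
      case True then show ?thesis using idx_nth[OF d, of k] y0 p assms F1
        by (auto simp: nth_eq_iff_index_eq)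
    next
      case False
      have "?ys ! p = v" using F1 False p by simp
      then show ?thesis using idx_nth[OF d, of p] idx_nth[OF assms(1) p(1)] p F1 False assms
        by (auto simp: nth_eq_iff_index_eq)
    qed
  qed
qed


lemma card_lessSuc_filter:
  "card {s. s < Suc t \<and> P s} = card {s. s < t \<and> P s} + (if P t then 1 else 0)"
proof (cases "P t")
  case True
  have "{s. s < Suc t \<and> P s} = insert t {s. s < t \<and> P s}" using True by auto
  then show ?thesis using True by simp
next
  case False
  have "{s. s < Suc t \<and> P s} = {s. s < t \<and> P s}" using False less_Suc_eq by auto
  then show ?thesis using False by simp
qed

lemma card_pairs: "2 * card {(u,v). u < v \<and> v < (n::nat)} = n * (n - 1)"
proof (induction n)
  case 0 then show ?case by simp
next
  case (Suc n)
  have e: "{(u,v). u < v \<and> v < Suc n} = {(u,v). u < v \<and> v < n} \<union> (\<lambda>u. (u,n)) ` {..<n}"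
    by auto
  have f: "finite {(u,v). u < v \<and> v < (n::nat)}"
    by (rule finite_subset[of _ "{..<n} \<times> {..<n}"]) auto
  have "card {(u,v). u < v \<and> v < Suc n} = card {(u,v). u < v \<and> v < n} + n"
    unfolding e by (subst card_Un_disjoint) (auto simp: f card_image inj_on_def)
  then show ?case using Suc by (cases n) (auto simp: algebra_simps)
qed

lemma exists_change: "P (0::nat) \<Longrightarrow> \<not> P n \<Longrightarrow> \<exists>s<n. P s \<and> \<not> P (Suc s)"
  by (induction n) (auto simp: less_Suc_eq)


locale hp =
  fixes R :: "nat \<Rightarrow> nat list" and kk :: "nat \<Rightarrow> nat"
  assumes len: "length (R t) = 30"
  and dist: "distinct (R t)"
  and rset: "set (R t) = {..<30}"
  and kk_lt: "kk t + 1 < 30"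
  and step: "R (Suc t) = (R t)[kk t := R t ! (kk t + 1), kk t + 1 := R t ! kk t]"
  and R0: "p < 30 \<Longrightarrow> R 0 ! p = p"
  and Rend: "p < 30 \<Longrightarrow> R 435 ! p = 29 - p"
  and dec1: "t < 435 \<Longrightarrow> t' < 435 \<Longrightarrow>
     (R t ! kk t div 10 = 0 \<and> R t ! (kk t + 1) div 10 = 1 \<or> R t ! kk t div 10 = 1 \<and> R t ! (kk t + 1) div 10 = 0) \<Longrightarrow>
     (R t' ! kk t' div 10 = 2 \<and> R t' ! (kk t' + 1) div 10 < 2 \<or> R t' ! (kk t' + 1) div 10 = 2 \<and> R t' ! kk t' div 10 < 2) \<Longrightarrow> t < t'"
  and dec2: "t < 435 \<Longrightarrow> t' < 435 \<Longrightarrow>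
     (R t ! kk t div 10 = 0 \<and> R t ! (kk t + 1) div 10 = 2 \<or> R t ! kk t div 10 = 2 \<and> R t ! (kk t + 1) div 10 = 0) \<Longrightarrow>
     (R t' ! kk t' div 10 = 1 \<and> R t' ! (kk t' + 1) div 10 = 2 \<or> R t' ! kk t' div 10 = 2 \<and> R t' ! (kk t' + 1) div 10 = 1) \<Longrightarrow> t < t'"
begin

definition X where "X t = R t ! kk t"
definition Y where "Y t = R t ! (kk t + 1)"
definition pos where "pos t v = idx (R t) v"

lemma pos_lt: "v < 30 \<Longrightarrow> pos t v < 30 \<and> R t ! pos t v = v"
  unfolding pos_def using idx_in[of v "R t"] rset len by auto

lemma pos_nth: "p < 30 \<Longrightarrow> pos t (R t ! p) = p"
  unfolding pos_def using idx_nth dist len by metis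

lemma nth_lt: "p < 30 \<Longrightarrow> R t ! p < 30"
  using nth_mem[of p "R t"] rset len by auto

lemma XY_lt: "X t < 30" "Y t < 30"
  unfolding X_def Y_def using nth_lt[of "kk t" t] nth_lt[of "kk t + 1" t] kk_lt[of t] by auto

lemma XY_ne: "X t \<noteq> Y t"
  unfolding X_def Y_def using dist len kk_lt nth_eq_iff_index_eq by (metis add_lessD1 n_not_Suc_n Suc_eq_plus1)

lemma pos_X: "pos t (X t) = kk t" and pos_Y: "pos t (Y t) = kk t + 1"
  unfolding X_def Y_def using pos_nth[of "kk t" t] pos_nth[of "kk t + 1" t] kk_lt[of t] by auto

lemma pos_Suc: "v < 30 \<Longrightarrow> pos (Suc t) v = (if v = X t then kk t + 1 else if v = Y t then kk t else pos t v)"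
  unfolding pos_def X_def Y_def step using idx_swap[of "R t" "kk t" v] dist kk_lt len rset by auto

lemma pos_other: "v < 30 \<Longrightarrow> v \<noteq> X t \<Longrightarrow> v \<noteq> Y t \<Longrightarrow> pos t v \<noteq> kk t \<and> pos t v \<noteq> kk t + 1"
  using pos_lt[of v t] unfolding X_def Y_def by auto

lemma pos0: "v < 30 \<Longrightarrow> pos 0 v = v"
  using pos_nth[of v 0] R0 by auto

lemma pos_end: "v < 30 \<Longrightarrow> pos 435 v = 29 - v"
  using pos_nth[of "29 - v" 435] Rend[of "29 - v"] by auto

lemma ord_same: "u < 30 \<Longrightarrow> v < 30 \<Longrightarrow> \<not> (u = X t \<and> v = Y t) \<Longrightarrow> \<not> (u = Y t \<and> v = X t) \<Longrightarrow>
   (pos (Suc t) u < pos (Suc t) v \<longleftrightarrow> pos t u < pos t v)"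
  using pos_Suc[of u t] pos_Suc[of v t] pos_other[of u t] pos_other[of v t] pos_X[of t] pos_Y[of t]
  by (cases "u = v") auto

definition IS where "IS t = {(u,v). u < v \<and> v < 30 \<and> pos t v < pos t u}"

lemma IS_fin: "finite (IS t)"
  by (rule finite_subset[of _ "{..<30} \<times> {..<30}"]) (auto simp: IS_def)

lemma IS_Suc1: "X t < Y t \<Longrightarrow> IS (Suc t) = insert (X t, Y t) (IS t) \<and> (X t, Y t) \<notin> IS t"
proof -
  assume a: "X t < Y t"
  have "(u,v) \<in> IS (Suc t) \<longleftrightarrow> (u,v) \<in> insert (X t, Y t) (IS t)" for u v
  proof (cases "u = X t \<and> v = Y t")
    case True then show ?thesis using a XY_lt pos_Suc pos_X pos_Y XY_ne by (auto simp: IS_def)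
  next
    case False
    then show ?thesis using ord_same[of v u t] a by (auto simp: IS_def)
  qed
  then show ?thesis using pos_X pos_Y by (auto simp: IS_def)
qed

lemma IS_Suc2: "Y t < X t \<Longrightarrow> IS t = insert (Y t, X t) (IS (Suc t)) \<and> (Y t, X t) \<notin> IS (Suc t)"
proof -
  assume a: "Y t < X t"
  have "(u,v) \<in> IS t \<longleftrightarrow> (u,v) \<in> insert (Y t, X t) (IS (Suc t))" for u v
  proof (cases "u = Y t \<and> v = X t")
    case True then show ?thesis using a XY_lt pos_Suc pos_X pos_Y XY_ne by (auto simp: IS_def)
  next
    case False
    then show ?thesis using ord_same[of v u t] a by (auto simp: IS_def)
  qed
  then show ?thesis using XY_lt pos_Suc XY_ne by (auto simp: IS_def)
qed

lemma inv_Suc_le: "card (IS (Suc t)) \<le> card (IS t) + 1"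
proof (cases "X t < Y t")
  case True then show ?thesis using IS_Suc1 IS_fin by simp
next
  case False then have "Y t < X t" using XY_ne by (meson linorder_neqE_nat)
  then show ?thesis using IS_Suc2[of t] IS_fin by simp
qed

lemma inv_le: "card (IS (t + d)) \<le> card (IS t) + d"
  by (induction d) (use inv_Suc_le in \<open>auto intro: le_trans\<close>)

lemma IS0: "IS 0 = {}"
  by (auto simp: IS_def pos0)

lemma IS_end: "card (IS 435) = 435"
proof -
  have "IS 435 = {(u,v). u < v \<and> v < (30::nat)}" by (auto simp: IS_def pos_end)
  moreover have "2 * card {(u,v). u < v \<and> v < (30::nat)} = 870" using card_pairs[of 30] by simp
  ultimately show ?thesis by simp
qed

lemma F1: assumes "t < 435" shows "X t < Y t"
proof (rule ccontr)
  assume "\<not> X t < Y t"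
  then have yx: "Y t < X t" using XY_ne by (meson linorder_neqE_nat)
  have a: "card (IS t) = card (IS (Suc t)) + 1" using IS_Suc2[OF yx] IS_fin by simp
  have b: "card (IS t) \<le> t" using inv_le[of 0 t] IS0 by simp
  have c: "card (IS 435) \<le> card (IS (Suc t)) + (435 - Suc t)" using inv_le[of "Suc t" "435 - Suc t"] assms by simp
  show False using a b c IS_end assms by simp
qed

end

lemma tele_dec: "(\<And>t. t < n \<Longrightarrow> f (Suc t) + (if P t then 1 else 0) = (f t :: nat)) \<Longrightarrow>
   f n + card {s. s < n \<and> P s} = f 0"
proof (induction n)
  case 0 then show ?case by simp
next
  case (Suc n)
  then have "f n + card {s. s < n \<and> P s} = f 0" by simp
  moreover have "f (Suc n) + (if P n then 1 else 0) = f n" using Suc by simp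
  ultimately show ?case by (simp add: card_lessSuc_filter)
qed

lemma tele_inc: "(\<And>t. t < n \<Longrightarrow> f (Suc t) = (f t :: nat) + (if P t then 1 else 0)) \<Longrightarrow>
   f n = f 0 + card {s. s < n \<and> P s}"
proof (induction n)
  case 0 then show ?case by simp
next
  case (Suc n)
  then have "f n = f 0 + card {s. s < n \<and> P s}" by simp
  moreover have "f (Suc n) = f n + (if P n then 1 else 0)" using Suc by simp
  ultimately show ?case by (simp add: card_lessSuc_filter)
qed

lemma card_split: assumes "finite S" shows "card S = card (S - {x}) + (if x \<in> S then 1 else 0)"
proof (cases "x \<in> S")
  case True then show ?thesis using card_Suc_Diff1[OF assms True] by simp
next
  case False then show ?thesis by simp
qed

lemma d1: "(x::nat) < 10 \<Longrightarrow> x div 10 = 0" by simp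
lemma d2: "10 \<le> (x::nat) \<Longrightarrow> x < 20 \<Longrightarrow> x div 10 = 1" by (simp add: div_nat_eqI)
lemma d3: "20 \<le> (x::nat) \<Longrightarrow> x < 30 \<Longrightarrow> x div 10 = 2" by (simp add: div_nat_eqI)
lemma cls_ne: "(x::nat) < y \<Longrightarrow> y < 30 \<Longrightarrow> (x div 10 \<noteq> y div 10 \<longleftrightarrow> (x < 10 \<and> 10 \<le> y) \<or> (x < 20 \<and> 20 \<le> y))"
  by (cases "x < 10"; cases "x < 20"; cases "y < 10"; cases "y < 20") (auto simp: d1 d2 d3)

context hp begin

lemma mono1: assumes "u < v" "v < 30" "t < 435" "pos t v < pos t u"
  shows "pos (Suc t) v < pos (Suc t) u"
proof -
  have "\<not> (u = X t \<and> v = Y t)"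
  proof
    assume "u = X t \<and> v = Y t"
    then have "pos t u = kk t" "pos t v = kk t + 1" using pos_X[of t] pos_Y[of t] by simp_all
    then show False using assms(4) by simp
  qed
  moreover have "\<not> (u = Y t \<and> v = X t)"
  proof
    assume "u = Y t \<and> v = X t"
    moreover have "X t < Y t" using F1 assms(3) by blast
    ultimately show False using assms(1) by simp
  qed
  ultimately have n1: "\<not> (v = X t \<and> u = Y t)" "\<not> (v = Y t \<and> u = X t)" by blast+
  have u30: "u < 30" using assms(1,2) by simp
  have "pos (Suc t) v < pos (Suc t) u \<longleftrightarrow> pos t v < pos t u"
    by (rule ord_same[OF assms(2) u30 n1])
  then show ?thesis using assms(4) by blast
qed

lemma mono: assumes "u < v" "v < 30" "t + d \<le> 435" "pos t v < pos t u"
  shows "pos (t + d) v < pos (t + d) u"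
  using assms(3)
proof (induction d)
  case 0 then show ?case using assms(4) by simp
next
  case (Suc d)
  then have "pos (t + d) v < pos (t + d) u" by simp
  then have "pos (Suc (t + d)) v < pos (Suc (t + d)) u" using mono1[of u v "t + d"] assms(1,2) Suc.prems by simp
  then show ?case by simp
qed

lemma change: assumes "u < v" "v < 30" "s < 435" "pos s u < pos s v" "pos (Suc s) v < pos (Suc s) u"
  shows "X s = u \<and> Y s = v"
proof -
  have "(u = X s \<and> v = Y s) \<or> (u = Y s \<and> v = X s)"
  proof (rule ccontr)
    assume a: "\<not> ((u = X s \<and> v = Y s) \<or> (u = Y s \<and> v = X s))"
    have "u < 30" using assms(1,2) by simp
    then have "(pos (Suc s) u < pos (Suc s) v \<longleftrightarrow> pos s u < pos s v)"
      using ord_same[of u v s] assms(2) a by blast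
    then show False using assms(4,5) by simp
  qed
  moreover have "X s < Y s" using F1 assms(3) by blast
  ultimately show ?thesis using assms(1) by (metis less_asym)
qed

lemma swapped_pair: assumes "u < v" "v < 30" shows "\<exists>s<435. X s = u \<and> Y s = v"
proof -
  have u30: "u < 30" using assms by simp
  have "\<exists>s<435. pos s u < pos s v \<and> \<not> pos (Suc s) u < pos (Suc s) v"
  proof (rule exists_change)
    show "pos 0 u < pos 0 v" using pos0[OF u30] pos0[OF assms(2)] assms(1) by simp
    show "\<not> pos 435 u < pos 435 v" using pos_end[OF u30] pos_end[OF assms(2)] assms by simp
  qed
  then obtain s where s: "s < 435" "pos s u < pos s v" "\<not> pos (Suc s) u < pos (Suc s) v" by blast
  have "pos (Suc s) u \<noteq> pos (Suc s) v"
  proof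
    assume "pos (Suc s) u = pos (Suc s) v"
    then have "u = v" using pos_lt[OF u30, of "Suc s"] pos_lt[OF assms(2), of "Suc s"] by metis
    then show False using assms(1) by simp
  qed
  then have "pos (Suc s) v < pos (Suc s) u" using s(3) by simp
  then show ?thesis using change[of u v s] s assms by blast
qed

definition T0 where "T0 = (LEAST t. t = 435 \<or> (X t < 20 \<and> 20 \<le> Y t))"

lemma T0_le: "T0 \<le> 435"
  unfolding T0_def by (rule Least_le) simp

lemma T0_prop: "T0 < 435 \<Longrightarrow> X T0 < 20 \<and> 20 \<le> Y T0"
proof -
  assume a: "T0 < 435"
  have "T0 = 435 \<or> (X T0 < 20 \<and> 20 \<le> Y T0)" unfolding T0_def by (rule LeastI[of _ 435]) simp
  then show ?thesis using a by simp
qed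

lemma before_T0: "t < T0 \<Longrightarrow> \<not> (X t < 20 \<and> 20 \<le> Y t)"
  unfolding T0_def using not_less_Least by blast

lemma nth_Suc: "p < 30 \<Longrightarrow> R (Suc t) ! p = (if p = kk t then Y t else if p = kk t + 1 then X t else R t ! p)"
  unfolding step X_def Y_def using len kk_lt by (auto simp: nth_list_update)

lemma low: "t \<le> T0 \<Longrightarrow> p < 20 \<Longrightarrow> R t ! p < 20"
proof (induction t arbitrary: p)
  case 0 then show ?case using R0 by simp
next
  case (Suc t)
  have t: "t < T0" using Suc by simp
  have IH: "\<And>q. q < 20 \<Longrightarrow> R t ! q < 20" using Suc t by simp
  have nb: "\<not> (X t < 20 \<and> 20 \<le> Y t)" using before_T0[OF t] .
  show ?case
  proof (cases "p = kk t")
    case True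
    show ?thesis
    proof (cases "kk t + 1 < 20")
      case True2: True
      then show ?thesis using True nth_Suc[of p t] IH[of "kk t + 1"] Suc.prems unfolding Y_def by simp
    next
      case False
      then have "X t < 20" using IH[of "kk t"] True Suc.prems unfolding X_def by simp
      then show ?thesis using nb True nth_Suc[of p t] Suc.prems by simp
    qed
  next
    case False
    then show ?thesis using nth_Suc[of p t] IH Suc.prems unfolding X_def by auto
  qed
qed

lemma AB_before: assumes "t < 435" "X t < 10" "10 \<le> Y t" "Y t < 20" shows "t < T0"
proof (cases "T0 = 435")
  case True then show ?thesis using assms by simp
next
  case False
  then have T: "T0 < 435" using T0_le by simp
  have "X T0 < 20 \<and> 20 \<le> Y T0" using T0_prop[OF T] .
  moreover have "Y T0 < 30" using XY_lt by simp
  ultimately have c2: "R T0 ! kk T0 div 10 < 2 \<and> R T0 ! (kk T0 + 1) div 10 = 2"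
    unfolding X_def Y_def by (cases "R T0 ! kk T0 < 10") (auto simp: d1 d2 d3)
  have c1: "R t ! kk t div 10 = 0 \<and> R t ! (kk t + 1) div 10 = 1"
    using assms unfolding X_def Y_def by (auto simp: d1 d2)
  show ?thesis using dec1[OF assms(1) T] c1 c2 by blast
qed

lemma inv_T0: assumes "u < 10" "10 \<le> v" "v < 20" shows "pos T0 v < pos T0 u"
proof -
  obtain s where s: "s < 435" "X s = u" "Y s = v" using swapped_pair[of u v] assms by auto
  have sT: "s < T0" using AB_before[of s] s assms by simp
  have "pos (Suc s) v < pos (Suc s) u" using pos_Suc[of u s] pos_Suc[of v s] s assms XY_ne[of s] by auto
  then have "pos (Suc s + (T0 - Suc s)) v < pos (Suc s + (T0 - Suc s)) u"
    using mono[of u v "Suc s" "T0 - Suc s"] assms sT T0_le by simp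
  then show ?thesis using sT by simp
qed

lemma low_pos: assumes "w < 20" shows "pos T0 w < 20"
proof -
  have inj: "inj_on (\<lambda>p. R T0 ! p) {..<20}"
    using dist[of T0] len[of T0] by (auto simp: inj_on_def nth_eq_iff_index_eq)
  have "(\<lambda>p. R T0 ! p) ` {..<20} \<subseteq> {..<20}" using low T0_le by auto
  then have "(\<lambda>p. R T0 ! p) ` {..<20} = {..<20}" using endo_inj_surj[OF _ _ inj] by simp
  then have "w \<in> (\<lambda>p. R T0 ! p) ` {..<20}" using assms by simp
  then obtain p where "p < 20" "w = R T0 ! p" by auto
  then show ?thesis using pos_nth[of p T0] by simp
qed

lemma B_left: assumes "10 \<le> v" "v < 20" shows "pos T0 v < 10"
proof (rule ccontr)
  assume "\<not> pos T0 v < 10"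
  then have pv: "10 \<le> pos T0 v" by simp
  have "pos T0 ` {..<10} \<subseteq> {pos T0 v<..<20}"
  proof
    fix z assume "z \<in> pos T0 ` {..<10}"
    then obtain u where u: "u < 10" "z = pos T0 u" by auto
    have "pos T0 v < pos T0 u" using inv_T0[OF u(1) assms] .
    moreover have "pos T0 u < 20" using low_pos[of u] u(1) by simp
    ultimately show "z \<in> {pos T0 v<..<20}" using u(2) by simp
  qed
  moreover have "inj_on (pos T0) {..<10}"
  proof (rule inj_onI)
    fix x y assume "x \<in> {..<(10::nat)}" "y \<in> {..<(10::nat)}" "pos T0 x = pos T0 y"
    then have "x < 30" "y < 30" by simp_all
    then have "R T0 ! pos T0 x = x" "R T0 ! pos T0 y = y" using pos_lt by blast+
    then show "x = y" using \<open>pos T0 x = pos T0 y\<close> by metis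
  qed
  ultimately have "card {..<(10::nat)} \<le> card {pos T0 v<..<20}"
    using card_inj_on_le[of "pos T0" "{..<10}" "{pos T0 v<..<20}"] by simp
  then show False using pv by simp
qed

end

context hp begin
definition cnt where "cnt t lo hi = card {v. lo \<le> v \<and> v < hi \<and> pos t v < 15}"

lemma cnt_step: assumes "hi \<le> 30"
  shows "cnt (Suc t) lo hi + (if kk t = 14 \<and> lo \<le> X t \<and> X t < hi then 1 else 0)
       = cnt t lo hi + (if kk t = 14 \<and> lo \<le> Y t \<and> Y t < hi then 1 else 0)"
proof -
  let ?S = "\<lambda>t. {v. lo \<le> v \<and> v < hi \<and> pos t v < 15}"
  have fin: "finite (?S t)" for t by (rule finite_subset[of _ "{..<hi}"]) auto
  show ?thesis
  proof (cases "kk t = 14")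
    case False
    have "?S (Suc t) = ?S t" using assms pos_Suc pos_X pos_Y False by (auto split: if_splits)
    then show ?thesis using False by (simp add: cnt_def)
  next
    case True
    have e: "?S (Suc t) - {Y t} = ?S t - {X t}" using assms pos_Suc True pos_X pos_Y XY_ne by (auto split: if_splits)
    have "card (?S (Suc t)) = card (?S (Suc t) - {Y t}) + (if Y t \<in> ?S (Suc t) then 1 else 0)"
      by (rule card_split[OF fin])
    moreover have "card (?S t) = card (?S t - {X t}) + (if X t \<in> ?S t then 1 else 0)"
      by (rule card_split[OF fin])
    moreover have "Y t \<in> ?S (Suc t) \<longleftrightarrow> lo \<le> Y t \<and> Y t < hi" using True pos_Suc[of "Y t" t] XY_lt[of t] XY_ne[of t] by auto
    moreover have "X t \<in> ?S t \<longleftrightarrow> lo \<le> X t \<and> X t < hi" using True pos_X by auto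
    ultimately show ?thesis using True e by (simp add: cnt_def)
  qed
qed

lemma cntA: "card {s. s < 435 \<and> (kk s = 14 \<and> X s < 10 \<and> 10 \<le> Y s)} = 10"
proof -
  have "cnt 435 0 10 + card {s. s < 435 \<and> (kk s = 14 \<and> X s < 10 \<and> 10 \<le> Y s)} = cnt 0 0 10"
  proof (rule tele_dec)
    fix t assume "t < (435::nat)"
    then have "X t < Y t" by (rule F1)
    then show "cnt (Suc t) 0 10 + (if kk t = 14 \<and> X t < 10 \<and> 10 \<le> Y t then 1 else 0) = cnt t 0 10"
      using cnt_step[of 10 t 0] by (auto split: if_splits)
  qed
  moreover have "cnt 0 0 10 = 10"
  proof -
    have "{v. 0 \<le> v \<and> v < 10 \<and> pos 0 v < 15} = {..<10}" using pos0 by auto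
    then show ?thesis by (simp add: cnt_def)
  qed
  moreover have "cnt 435 0 10 = 0"
  proof -
    have "{v. 0 \<le> v \<and> v < 10 \<and> pos 435 v < 15} = {}" using pos_end by auto
    then show ?thesis by (simp add: cnt_def)
  qed
  ultimately show ?thesis by simp
qed

lemma cntC: "card {s. s < 435 \<and> (kk s = 14 \<and> X s < 20 \<and> 20 \<le> Y s)} = 10"
proof -
  have "cnt 435 20 30 = cnt 0 20 30 + card {s. s < 435 \<and> (kk s = 14 \<and> X s < 20 \<and> 20 \<le> Y s)}"
  proof (rule tele_inc)
    fix t assume "t < (435::nat)"
    then have "X t < Y t" by (rule F1)
    then show "cnt (Suc t) 20 30 = cnt t 20 30 + (if kk t = 14 \<and> X t < 20 \<and> 20 \<le> Y t then 1 else 0)"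
      using cnt_step[of 30 t 20] XY_lt[of t] by (auto split: if_splits)
  qed
  moreover have "cnt 0 20 30 = 0"
  proof -
    have "{v. 20 \<le> v \<and> v < 30 \<and> pos 0 v < 15} = {}" using pos0 by auto
    then show ?thesis by (simp add: cnt_def)
  qed
  moreover have "cnt 435 20 30 = 10"
  proof -
    have "{v. 20 \<le> v \<and> v < 30 \<and> pos 435 v < 15} = {20..<30}" using pos_end by auto
    then show ?thesis by (simp add: cnt_def)
  qed
  ultimately show ?thesis by simp
qed

lemma cntB: "card {s. s < T0 \<and> (kk s = 14 \<and> X s < 10 \<and> 10 \<le> Y s)} = 5"
proof -
  have "cnt T0 10 20 = cnt 0 10 20 + card {s. s < T0 \<and> (kk s = 14 \<and> X s < 10 \<and> 10 \<le> Y s)}"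
  proof (rule tele_inc)
    fix t assume t: "t < T0"
    then have "X t < Y t" using F1 T0_le by simp
    moreover have "kk t = 14 \<Longrightarrow> Y t < 20" using low[of t 15] t unfolding Y_def by simp
    ultimately show "cnt (Suc t) 10 20 = cnt t 10 20 + (if kk t = 14 \<and> X t < 10 \<and> 10 \<le> Y t then 1 else 0)"
      using cnt_step[of 20 t 10] by (auto split: if_splits)
  qed
  moreover have "cnt 0 10 20 = 5"
  proof -
    have "{v. 10 \<le> v \<and> v < 20 \<and> pos 0 v < 15} = {10..<15}" using pos0 by auto
    then show ?thesis by (simp add: cnt_def)
  qed
  moreover have "cnt T0 10 20 = 10"
  proof -
    have "{v. 10 \<le> v \<and> v < 20 \<and> pos T0 v < 15} = {10..<20}" using B_left by fastforce
    then show ?thesis by (simp add: cnt_def)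
  qed
  ultimately show ?thesis by simp
qed

lemma main: "card {t. t < 435 \<and> kk t = 14 \<and> X t div 10 \<noteq> Y t div 10} = 15"
proof -
  define E1 where "E1 = {s. s < 435 \<and> (kk s = 14 \<and> X s < 10 \<and> 10 \<le> Y s)}"
  define E2 where "E2 = {s. s < 435 \<and> (kk s = 14 \<and> X s < 20 \<and> 20 \<le> Y s)}"
  define EAB where "EAB = {s. s < T0 \<and> (kk s = 14 \<and> X s < 10 \<and> 10 \<le> Y s)}"
  have fin: "finite E1" "finite E2" "finite EAB" unfolding E1_def E2_def EAB_def by auto
  have sub: "EAB \<subseteq> E1" unfolding EAB_def E1_def using T0_le by auto
  have e1: "E1 = EAB \<union> (E1 \<inter> E2)"
  proof
    show "E1 \<subseteq> EAB \<union> (E1 \<inter> E2)"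
    proof
      fix s assume s: "s \<in> E1"
      show "s \<in> EAB \<union> (E1 \<inter> E2)"
      proof (cases "Y s < 20")
        case True then show ?thesis using s AB_before[of s] unfolding E1_def EAB_def by auto
      next
        case False then show ?thesis using s unfolding E1_def E2_def by auto
      qed
    qed
  next
    show "EAB \<union> (E1 \<inter> E2) \<subseteq> E1" using sub by auto
  qed
  have dj: "EAB \<inter> (E1 \<inter> E2) = {}"
  proof -
    have "s < T0 \<Longrightarrow> kk s = 14 \<Longrightarrow> \<not> 20 \<le> Y s" for s using low[of s 15] unfolding Y_def by simp
    then show ?thesis unfolding EAB_def E2_def by auto
  qed
  have c1: "card E1 = 10" "card E2 = 10" "card EAB = 5"
    using cntA cntC cntB unfolding E1_def E2_def EAB_def by auto
  have ci: "card (E1 \<inter> E2) = 5"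
    using card_Un_disjoint[of EAB "E1 \<inter> E2"] fin dj e1 c1 by simp
  have tgt: "{t. t < 435 \<and> kk t = 14 \<and> X t div 10 \<noteq> Y t div 10} = E1 \<union> E2"
  proof -
    have "t < 435 \<Longrightarrow> (X t div 10 \<noteq> Y t div 10 \<longleftrightarrow> (X t < 10 \<and> 10 \<le> Y t) \<or> (X t < 20 \<and> 20 \<le> Y t))" for t
      using F1[of t] XY_lt[of t] cls_ne by blast
    then show ?thesis unfolding E1_def E2_def by auto
  qed
  have "card (E1 \<union> E2) + card (E1 \<inter> E2) = card E1 + card E2" using card_Un_Int[OF fin(1,2)] by simp
  then show ?thesis using tgt c1 ci by simp
qed

end

lemma dv1: fixes x :: nat shows "x div 10 = 0 \<longleftrightarrow> x < 10" by (simp add: div_eq_0_iff)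
lemma dv4: fixes x :: nat shows "x div 10 < 2 \<longleftrightarrow> x < 20" by (simp add: div_less_iff_less_mult)
lemma dv2: fixes x :: nat shows "x div 10 = 1 \<longleftrightarrow> 10 \<le> x \<and> x < 20"
proof -
  have "x div 10 = 1 \<longleftrightarrow> \<not> x div 10 < 1 \<and> x div 10 < 2" by linarith
  also have "\<dots> \<longleftrightarrow> \<not> x < 10 \<and> x < 20" by (simp only: div_less_iff_less_mult[of 10]) simp
  finally show ?thesis by (simp add: not_less)
qed
lemma dv3: fixes x :: nat shows "x < 30 \<Longrightarrow> x div 10 = 2 \<longleftrightarrow> 20 \<le> x"
proof -
  assume "x < 30"
  then have "x div 10 < 3" by (simp add: div_less_iff_less_mult)
  then have "x div 10 = 2 \<longleftrightarrow> \<not> x div 10 < 2" by linarith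
  also have "\<dots> \<longleftrightarrow> \<not> x < 20" by (simp add: div_less_iff_less_mult)
  finally show ?thesis by (simp add: not_less)
qed

lemma swapped_gen: assumes "distinct xs" "adj_swap i xs ys"
  shows "{x. \<exists>p < length xs. xs ! p = x \<and> ys ! p \<noteq> x} = {xs!(i-1), xs!i}"
proof -
  have a: "1 \<le> i \<and> i < length xs \<and> ys = xs[i - 1 := xs ! i, i := xs ! (i - 1)]"
    using assms(2) by (simp only: adj_swap_def)
  then have i: "1 \<le> i" "i < length xs" and ys: "ys = xs[i - 1 := xs ! i, i := xs ! (i - 1)]"
    by blast+
  have ne: "xs!(i-1) \<noteq> xs!i"
  proof
    assume "xs!(i-1) = xs!i"
    then have "i - 1 = i" using nth_eq_iff_index_eq[OF assms(1), of "i-1" i] i by simp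
    then show False using i by simp
  qed
  have y1: "ys ! (i-1) = xs ! i" using ys i by (simp add: nth_list_update)
  have y2: "ys ! i = xs ! (i-1)" using ys i by simp
  have y3: "p \<noteq> i - 1 \<Longrightarrow> p \<noteq> i \<Longrightarrow> ys ! p = xs ! p" for p using ys by simp
  show ?thesis
  proof
    show "{x. \<exists>p < length xs. xs ! p = x \<and> ys ! p \<noteq> x} \<subseteq> {xs!(i-1), xs!i}"
    proof
      fix x assume "x \<in> {x. \<exists>p < length xs. xs ! p = x \<and> ys ! p \<noteq> x}"
      then obtain p where p: "p < length xs" "xs ! p = x" "ys ! p \<noteq> x" by blast
      then have "p = i - 1 \<or> p = i" using y3[of p] by blast
      then show "x \<in> {xs!(i-1), xs!i}" using p by auto
    qed
    show "{xs!(i-1), xs!i} \<subseteq> {x. \<exists>p < length xs. xs ! p = x \<and> ys ! p \<noteq> x}"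
    proof -
      have "xs!(i-1) \<in> {x. \<exists>p < length xs. xs ! p = x \<and> ys ! p \<noteq> x}"
      proof (rule CollectI, rule exI[of _ "i-1"])
        show "i - 1 < length xs \<and> xs!(i-1) = xs!(i-1) \<and> ys!(i-1) \<noteq> xs!(i-1)" using i y1 ne by simp
      qed
      moreover have "xs!i \<in> {x. \<exists>p < length xs. xs ! p = x \<and> ys ! p \<noteq> x}"
      proof (rule CollectI, rule exI[of _ "i"])
        show "i < length xs \<and> xs!i = xs!i \<and> ys!i \<noteq> xs!i" using i y2 ne by simp
      qed
      ultimately show ?thesis by blast
    qed
  qed
qed

lemma adj_unique: assumes "distinct xs" "adj_swap i xs ys" "adj_swap i' xs ys" shows "i = i'"
proof -
  have e: "{xs!(i-1), xs!i} = {xs!(i'-1), xs!i'}" using swapped_gen[OF assms(1,2)] swapped_gen[OF assms(1,3)] by simp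
  have "1 \<le> i \<and> i < length xs" "1 \<le> i' \<and> i' < length xs" using assms(2,3) by (simp_all only: adj_swap_def)
  then have i: "1 \<le> i" "i < length xs" "1 \<le> i'" "i' < length xs" by blast+
  have a1: "xs!i = xs!(i'-1) \<or> xs!i = xs!i'" using e by blast
  have a2: "xs!i' = xs!(i-1) \<or> xs!i' = xs!i" using e by blast
  have b1: "xs!i = xs!(i'-1) \<Longrightarrow> i = i'-1" using nth_eq_iff_index_eq[OF assms(1), of i "i'-1"] i by simp
  have b2: "xs!i = xs!i' \<Longrightarrow> i = i'" using nth_eq_iff_index_eq[OF assms(1), of i "i'"] i by simp
  have b3: "xs!i' = xs!(i-1) \<Longrightarrow> i' = i-1" using nth_eq_iff_index_eq[OF assms(1), of i' "i-1"] i by simp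
  show ?thesis
  proof (rule ccontr)
    assume ne: "i \<noteq> i'"
    then have c1: "xs!i \<noteq> xs!i'" using b2 by blast
    then have "i = i'-1" using a1 b1 by blast
    moreover have "i' = i - 1" using a2 b3 c1 by metis
    ultimately show False using i by linarith
  qed
qed

lemma between_pair: "between S T {u,w} \<longleftrightarrow> (u \<in> S \<and> w \<in> T) \<or> (w \<in> S \<and> u \<in> T)"
  unfolding between_def by (auto simp: doubleton_eq_iff)


lemma lt3: "(c::nat) < 3 \<Longrightarrow> c = 0 \<or> c = 1 \<or> c = 2" by arith

lemma cls3: "(x::nat) < 3 \<Longrightarrow> y < 3 \<Longrightarrow> (((x = 0 \<and> y = 1) \<or> (y = 0 \<and> x = 1)) \<or> ((x = 0 \<and> y = 2) \<or> (y = 0 \<and> x = 2)) \<or> ((x = 1 \<and> y = 2) \<or> (y = 1 \<and> x = 2))) \<longleftrightarrow> x \<noteq> y"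
  by presburger

theorem lemma1:
  fixes P :: "'a list list" and A B C :: "'a set"
  assumes "half_period 30 P"
    and "three_decomposable_with 30 P A B C"
  shows "N_bi 30 15 P A B C = 15"
proof -
  have c2: "(30::nat) choose 2 = 435" by (simp add: choose_two)
  obtain S j where al: "allowable_seq 30 S" and Pd: "P = map (\<lambda>k. S (j + int k)) [0..<(30 choose 2) + 1]"
    using assms(1) unfolding half_period_def by blast
  define Q where "Q t = S (j + int t)" for t
  have PQ: "P ! t = Q t" if "t \<le> 435" for t
  proof -
    have "t < length [0..<(30 choose 2) + 1]" using that c2 by (simp del: upt_rec_numeral)
    then show ?thesis unfolding Pd Q_def using c2 by (simp del: upt_rec_numeral)
  qed
  have alS1: "distinct (S m) \<and> length (S m) = 30 \<and> set (S m) = set (S 0)" for m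
    using al unfolding allowable_seq_def by blast
  have alS2: "\<exists>i. adj_swap i (S m) (S (m + 1))" for m
    using al unfolding allowable_seq_def by blast
  have alS3: "S (m + 435) = rev (S m)" for m
  proof -
    have "S (m + int (30 choose 2)) = rev (S m)" using al unfolding allowable_seq_def by blast
    then show ?thesis using c2 by simp
  qed
  have Qd: "distinct (Q t)" and Ql: "length (Q t) = 30" and Qs: "set (Q t) = set (Q 0)" for t
    using alS1 unfolding Q_def by (metis, metis, metis)
  have Qadj: "\<exists>i. adj_swap i (Q t) (Q (Suc t))" for t
  proof -
    have e: "j + int (Suc t) = (j + int t) + 1" by simp
    show ?thesis unfolding Q_def e using alS2[of "j + int t"] .
  qed
  have Qend: "Q 435 = rev (Q 0)"
    unfolding Q_def using alS3[of j] by (simp add: add.commute)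
  obtain a b c :: "nat \<Rightarrow> 'a" where
    Ad: "A = a ` {1..30 div 3}" and Bd: "B = b ` {1..30 div 3}" and Cd: "C = c ` {1..30 div 3}" and
    P0: "P ! 0 = map a (rev [1..<30 div 3 + 1]) @ map b [1..<30 div 3 + 1] @ map c [1..<30 div 3 + 1]" and
    D1: "\<And>t t'. t < 30 choose 2 \<and> t' < 30 choose 2 \<and>
            between A B (swapped P t) \<and> between C (A \<union> B) (swapped P t') \<Longrightarrow> t < t'" and
    D2: "\<And>t t'. t < 30 choose 2 \<and> t' < 30 choose 2 \<and>
            between A C (swapped P t) \<and> between B C (swapped P t') \<Longrightarrow> t < t'"
    using assms(2) unfolding three_decomposable_with_def by blast
  have d3: "(30::nat) div 3 = 10" by simp
  have Q0: "Q 0 = map a (rev [1..<11]) @ map b [1..<11] @ map c [1..<11]"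
    using P0 PQ[of 0] unfolding d3 by simp
  have Q0n: "Q 0 ! p = (if p < 10 then a (10 - p) else if p < 20 then b (p - 9) else c (p - 19))"
    if "p < 30" for p
  proof -
    have e1: "p < 10 \<Longrightarrow> Suc (9 - p) = 10 - p" by simp
    have e2: "\<not> p < 10 \<Longrightarrow> Suc (p - 10) = p - 9" by simp
    have e3: "\<not> p < 20 \<Longrightarrow> Suc (p - 20) = p - 19" by simp
    have e4: "p < 20 \<Longrightarrow> p - 10 < 10" "\<not> p < 20 \<Longrightarrow> \<not> p - 10 < 10" by simp_all
    show ?thesis unfolding Q0 using that e1 e2 e3 e4
      by (cases "p < 10"; cases "p < 20") (simp_all add: nth_append rev_nth del: upt_rec_numeral)
  qed
  define idx0 where "idx0 = idx (Q 0)"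
  have idx0n: "idx0 (Q 0 ! p) = p" if "p < 30" for p
    unfolding idx0_def using idx_nth[OF Qd[of 0]] Ql[of 0] that by simp
  have idx0_in: "idx0 u < 30 \<and> Q 0 ! idx0 u = u" if "u \<in> set (Q 0)" for u
    unfolding idx0_def using idx_in[OF that] Ql[of 0] by simp
  have pa: "idx0 (a m) = 10 - m" if "m \<in> {1..10}" for m
  proof -
    have "Q 0 ! (10 - m) = a m" using Q0n[of "10 - m"] that by simp
    then show ?thesis using idx0n[of "10 - m"] that by simp
  qed
  have pb: "idx0 (b m) = 9 + m" if "m \<in> {1..10}" for m
  proof -
    have "Q 0 ! (9 + m) = b m" using Q0n[of "9 + m"] that by simp
    then show ?thesis using idx0n[of "9 + m"] that by simp
  qed
  have pc: "idx0 (c m) = 19 + m" if "m \<in> {1..10}" for m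
  proof -
    have "Q 0 ! (19 + m) = c m" using Q0n[of "19 + m"] that by simp
    then show ?thesis using idx0n[of "19 + m"] that by simp
  qed
  have cls: "(u \<in> A \<longleftrightarrow> idx0 u div 10 = 0) \<and> (u \<in> B \<longleftrightarrow> idx0 u div 10 = 1) \<and> (u \<in> C \<longleftrightarrow> idx0 u div 10 = 2)"
    if u: "u \<in> set (Q 0)" for u
  proof -
    define p where "p = idx0 u"
    have p: "p < 30" "Q 0 ! p = u" using idx0_in[OF u] unfolding p_def by auto
    have iA: "u \<in> A \<Longrightarrow> p < 10" unfolding Ad d3 p_def using pa by auto
    have iB: "u \<in> B \<Longrightarrow> 10 \<le> p \<and> p < 20" unfolding Bd d3 p_def using pb by auto
    have iC: "u \<in> C \<Longrightarrow> 20 \<le> p" unfolding Cd d3 p_def using pc by auto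
    have oA: "p < 10 \<Longrightarrow> u \<in> A"
    proof -
      assume h: "p < 10"
      then have ue: "u = a (10 - p)" using p Q0n[of p] by simp
      have "10 - p \<in> {1..10}" using h by auto
      then have "a (10 - p) \<in> a ` {1..10}" by (rule imageI)
      then show "u \<in> A" unfolding Ad d3 ue by simp
    qed
    have oB: "10 \<le> p \<Longrightarrow> p < 20 \<Longrightarrow> u \<in> B"
    proof -
      assume h: "10 \<le> p" "p < 20"
      then have ue: "u = b (p - 9)" using p Q0n[of p] by simp
      have "p - 9 \<in> {1..10}" using h by auto
      then have "b (p - 9) \<in> b ` {1..10}" by (rule imageI)
      then show "u \<in> B" unfolding Bd d3 ue by simp
    qed
    have oC: "20 \<le> p \<Longrightarrow> u \<in> C"
    proof -
      assume h: "20 \<le> p"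
      then have ue: "u = c (p - 19)" using p Q0n[of p] by simp
      have "p - 19 \<in> {1..10}" using h p by auto
      then have "c (p - 19) \<in> c ` {1..10}" by (rule imageI)
      then show "u \<in> C" unfolding Cd d3 ue by simp
    qed
    show ?thesis unfolding p_def[symmetric] using iA iB iC oA oB oC p dv1[of p] dv2[of p] dv3[of p]
      by (meson not_le)
  qed
  define R where "R t = map idx0 (Q t)" for t
  define kk where "kk t = (SOME i. adj_swap i (Q t) (Q (Suc t))) - 1" for t
  have kkp: "adj_swap (kk t + 1) (Q t) (Q (Suc t))" for t
  proof -
    have s: "adj_swap (SOME i. adj_swap i (Q t) (Q (Suc t))) (Q t) (Q (Suc t))"
      using someI_ex[OF Qadj[of t]] .
    then have "1 \<le> (SOME i. adj_swap i (Q t) (Q (Suc t)))" by (simp only: adj_swap_def)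
    then show ?thesis using s unfolding kk_def by simp
  qed
  have kkQ: "kk t + 1 < 30 \<and> Q (Suc t) = (Q t)[kk t := Q t ! (kk t + 1), kk t + 1 := Q t ! kk t]" for t
  proof -
    have "1 \<le> kk t + 1 \<and> kk t + 1 < length (Q t) \<and> Q (Suc t) = (Q t)[kk t + 1 - 1 := Q t ! (kk t + 1), kk t + 1 := Q t ! (kk t + 1 - 1)]"
      using kkp[of t] by (simp only: adj_swap_def)
    then show ?thesis using Ql[of t] by simp
  qed
  have inj0: "inj_on idx0 (set (Q 0))"
    by (rule inj_onI) (metis idx0_in)
  have img: "idx0 ` set (Q 0) = {..<30}"
  proof
    show "idx0 ` set (Q 0) \<subseteq> {..<30}" using idx0_in by auto
    show "{..<30} \<subseteq> idx0 ` set (Q 0)"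
    proof
      fix p assume "p \<in> {..<(30::nat)}"
      then have "p < 30" by simp
      then have "idx0 (Q 0 ! p) = p" "Q 0 ! p \<in> set (Q 0)" using idx0n Ql[of 0] by auto
      then show "p \<in> idx0 ` set (Q 0)" by (metis imageI)
    qed
  qed
  have swp: "swapped P t = {Q t ! kk t, Q t ! (kk t + 1)}" if "t < 435" for t
  proof -
    have "swapped P t = {x. \<exists>p < length (Q t). Q t ! p = x \<and> Q (Suc t) ! p \<noteq> x}"
      unfolding swapped_def using PQ[of t] PQ[of "Suc t"] that by simp
    also have "\<dots> = {Q t ! (kk t + 1 - 1), Q t ! (kk t + 1)}" by (rule swapped_gen[OF Qd kkp])
    finally show ?thesis by simp
  qed
  have mem: "Q t ! kk t \<in> set (Q 0) \<and> Q t ! (kk t + 1) \<in> set (Q 0)" for t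
  proof -
    have "kk t < length (Q t)" "kk t + 1 < length (Q t)" using kkQ[of t] Ql[of t] by simp_all
    then have "Q t ! kk t \<in> set (Q t)" "Q t ! (kk t + 1) \<in> set (Q t)" by simp_all
    then show ?thesis using Qs[of t] by simp
  qed
  have RX: "R t ! kk t = idx0 (Q t ! kk t) \<and> R t ! (kk t + 1) = idx0 (Q t ! (kk t + 1))" for t
    unfolding R_def using kkQ[of t] Ql[of t] by simp
  have toA: "u \<in> A \<union> B" if "u \<in> set (Q 0)" "idx0 u div 10 < 2" for u
  proof -
    have "idx0 u div 10 = 0 \<or> idx0 u div 10 = 1" using that(2) by linarith
    then show ?thesis using cls[OF that(1)] by blast
  qed
  interpret H: hp R kk
  proof
    fix t
    show "length (R t) = 30" unfolding R_def using Ql by simp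
    show "distinct (R t)" unfolding R_def using Qd[of t] Qs[of t] inj0 by (simp add: distinct_map)
    show "set (R t) = {..<30}" unfolding R_def using Qs[of t] img by simp
    show "kk t + 1 < 30" using kkQ by blast
    show "R (Suc t) = (R t)[kk t := R t ! (kk t + 1), kk t + 1 := R t ! kk t]"
      unfolding R_def using kkQ[of t] Ql[of t] by (simp add: map_update)
  next
    fix p :: nat assume p: "p < 30"
    show "R 0 ! p = p" unfolding R_def using p Ql[of 0] idx0n by simp
    have "rev (Q 0) ! p = Q 0 ! (29 - p)" using p Ql[of 0] by (simp add: rev_nth)
    then show "R 435 ! p = 29 - p" unfolding R_def using p Ql[of 435] Qend idx0n[of "29 - p"] by simp
  next
    fix t t' :: nat
    assume t: "t < 435" "t' < 435"
      and h1: "R t ! kk t div 10 = 0 \<and> R t ! (kk t + 1) div 10 = 1 \<or> R t ! kk t div 10 = 1 \<and> R t ! (kk t + 1) div 10 = 0"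
      and h2: "R t' ! kk t' div 10 = 2 \<and> R t' ! (kk t' + 1) div 10 < 2 \<or> R t' ! (kk t' + 1) div 10 = 2 \<and> R t' ! kk t' div 10 < 2"
    define u where "u = Q t ! kk t"
    define w where "w = Q t ! (kk t + 1)"
    define u' where "u' = Q t' ! kk t'"
    define w' where "w' = Q t' ! (kk t' + 1)"
    have m: "u \<in> set (Q 0)" "w \<in> set (Q 0)" "u' \<in> set (Q 0)" "w' \<in> set (Q 0)"
      unfolding u_def w_def u'_def w'_def using mem by auto
    have g1: "(idx0 u div 10 = 0 \<and> idx0 w div 10 = 1) \<or> (idx0 u div 10 = 1 \<and> idx0 w div 10 = 0)"
      using h1 RX[of t] unfolding u_def w_def by simp
    then have "(u \<in> A \<and> w \<in> B) \<or> (w \<in> A \<and> u \<in> B)" using cls[OF m(1)] cls[OF m(2)] by blast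
    then have b1: "between A B (swapped P t)" unfolding swp[OF t(1)] u_def[symmetric] w_def[symmetric] between_pair .
    have g2: "(idx0 u' div 10 = 2 \<and> idx0 w' div 10 < 2) \<or> (idx0 w' div 10 = 2 \<and> idx0 u' div 10 < 2)"
      using h2 RX[of t'] unfolding u'_def w'_def by simp
    then have "(u' \<in> C \<and> w' \<in> A \<union> B) \<or> (w' \<in> C \<and> u' \<in> A \<union> B)"
      using cls[OF m(3)] cls[OF m(4)] toA[OF m(3)] toA[OF m(4)] by blast
    then have b2: "between C (A \<union> B) (swapped P t')" unfolding swp[OF t(2)] u'_def[symmetric] w'_def[symmetric] between_pair .
    show "t < t'" using D1[of t t'] b1 b2 t c2 by simp
  next
    fix t t' :: nat
    assume t: "t < 435" "t' < 435"
      and h1: "R t ! kk t div 10 = 0 \<and> R t ! (kk t + 1) div 10 = 2 \<or> R t ! kk t div 10 = 2 \<and> R t ! (kk t + 1) div 10 = 0"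
      and h2: "R t' ! kk t' div 10 = 1 \<and> R t' ! (kk t' + 1) div 10 = 2 \<or> R t' ! kk t' div 10 = 2 \<and> R t' ! (kk t' + 1) div 10 = 1"
    define u where "u = Q t ! kk t"
    define w where "w = Q t ! (kk t + 1)"
    define u' where "u' = Q t' ! kk t'"
    define w' where "w' = Q t' ! (kk t' + 1)"
    have m: "u \<in> set (Q 0)" "w \<in> set (Q 0)" "u' \<in> set (Q 0)" "w' \<in> set (Q 0)"
      unfolding u_def w_def u'_def w'_def using mem by auto
    have g1: "(idx0 u div 10 = 0 \<and> idx0 w div 10 = 2) \<or> (idx0 u div 10 = 2 \<and> idx0 w div 10 = 0)"
      using h1 RX[of t] unfolding u_def w_def by simp
    then have "(u \<in> A \<and> w \<in> C) \<or> (w \<in> A \<and> u \<in> C)" using cls[OF m(1)] cls[OF m(2)] by blast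
    then have b1: "between A C (swapped P t)" unfolding swp[OF t(1)] u_def[symmetric] w_def[symmetric] between_pair .
    have g2: "(idx0 u' div 10 = 1 \<and> idx0 w' div 10 = 2) \<or> (idx0 u' div 10 = 2 \<and> idx0 w' div 10 = 1)"
      using h2 RX[of t'] unfolding u'_def w'_def by simp
    then have "(u' \<in> B \<and> w' \<in> C) \<or> (w' \<in> B \<and> u' \<in> C)"
      using cls[OF m(3)] cls[OF m(4)] by blast
    then have b2: "between B C (swapped P t')" unfolding swp[OF t(2)] u'_def[symmetric] w'_def[symmetric] between_pair .
    show "t < t'" using D2[of t t'] b1 b2 t c2 by simp
  qed
  have crit: "critical 30 15 P t \<longleftrightarrow> kk t = 14" if t: "t < 435" for t
  proof -
    have "critical 30 15 P t \<longleftrightarrow> adj_swap 15 (Q t) (Q (Suc t))"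
      unfolding critical_def is_itransp_def using PQ[of t] PQ[of "Suc t"] t by simp
    also have "\<dots> \<longleftrightarrow> kk t = 14"
    proof
      assume "adj_swap 15 (Q t) (Q (Suc t))"
      then have "kk t + 1 = 15" using adj_unique[OF Qd kkp] by blast
      then show "kk t = 14" by simp
    next
      assume "kk t = 14"
      then show "adj_swap 15 (Q t) (Q (Suc t))" using kkp[of t] by simp
    qed
    finally show ?thesis .
  qed
  have bich: "bichromatic A B C (swapped P t) \<longleftrightarrow> H.X t div 10 \<noteq> H.Y t div 10" if t: "t < 435" for t
  proof -
    define u where "u = Q t ! kk t"
    define w where "w = Q t ! (kk t + 1)"
    have m: "u \<in> set (Q 0)" "w \<in> set (Q 0)" unfolding u_def w_def using mem by auto
    have xy: "H.X t = idx0 u" "H.Y t = idx0 w" unfolding H.X_def H.Y_def u_def w_def using RX by auto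
    have l: "idx0 u div 10 < 3" "idx0 w div 10 < 3" using idx0_in[OF m(1)] idx0_in[OF m(2)] by auto
    have "bichromatic A B C (swapped P t) \<longleftrightarrow>
      ((u \<in> A \<and> w \<in> B) \<or> (w \<in> A \<and> u \<in> B)) \<or> ((u \<in> A \<and> w \<in> C) \<or> (w \<in> A \<and> u \<in> C)) \<or>
      ((u \<in> B \<and> w \<in> C) \<or> (w \<in> B \<and> u \<in> C))"
      unfolding bichromatic_def swp[OF t] u_def[symmetric] w_def[symmetric] between_pair ..
    also have "\<dots> \<longleftrightarrow> idx0 u div 10 \<noteq> idx0 w div 10"
    proof -
      have e: "u \<in> A \<longleftrightarrow> idx0 u div 10 = 0" "u \<in> B \<longleftrightarrow> idx0 u div 10 = 1" "u \<in> C \<longleftrightarrow> idx0 u div 10 = 2"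
        "w \<in> A \<longleftrightarrow> idx0 w div 10 = 0" "w \<in> B \<longleftrightarrow> idx0 w div 10 = 1" "w \<in> C \<longleftrightarrow> idx0 w div 10 = 2"
        using cls[OF m(1)] cls[OF m(2)] by blast+
      show ?thesis unfolding e by (rule cls3[OF l])
    qed
    finally show ?thesis unfolding xy .
  qed
  have "{t. t < 30 choose 2 \<and> critical 30 15 P t \<and> bichromatic A B C (swapped P t)}
      = {t. t < 435 \<and> kk t = 14 \<and> H.X t div 10 \<noteq> H.Y t div 10}"
  proof (rule Collect_cong)
    fix t
    show "(t < 30 choose 2 \<and> critical 30 15 P t \<and> bichromatic A B C (swapped P t)) =
       (t < 435 \<and> kk t = 14 \<and> H.X t div 10 \<noteq> H.Y t div 10)"
      using crit[of t] bich[of t] c2 by auto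
  qed
  then show ?thesis unfolding N_bi_def using H.main by simp
qed


end
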